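(* Consider a neutral evolutionary model on $N$ sites given by a replacement rule $p$ satisfying the fixation assumption described in the context. Let $\mathbf{a}_0=(1,2,\ldots,N)$ be the initial state of the ancestral Markov chain. Then for each site $i$, $$\rho_i=\lim_{t\to\infty}\Pr_{(\mathcal{A},\mathbf{a}_0)}\big[\mathbf{a}(t)=(i,\ldots,i)\big],$$ where $\mathbf{a}(t)$ is the state of the ancestral Markov chain at time $t$ started from $\mathbf{a}_0$.
   Context: There are $N$ sites $1,\ldots,N$. A replacement event is a pair $(R,\alpha)$ with $R\subseteq\{1,\ldots,N\}$ and $\alpha:R\to\{1,\ldots,N\}$. A replacement rule is a probability distribution $p(R,\alpha)$ on replacement events, independent of the state. For any finite alphabet $T$, the associated Markov chain on $T^N$ evolves as follows: at each time-step an event $(R,\alpha)$ is drawn with probability $p(R,\alpha)$ and the state $\mathbf{s}$ becomes $\mathbf{s}'$ with $s_i'=s_i$ if $i\notin R$ and $s_i'=s_{\alpha(i)}$ if $i\in R$. The evolutionary Markov chain $\mathcal{M}$ is this chain with alphabet $\{\mathrm{M},\mathrm{R}\}$; the ancestral Markov chain $\mathcal{A}$ is this chain with alphabet $\{1,\ldots,N\}$. Fixation assumption: there exist a site $i$ and a finite sequence of replacement events, each of positive probability, such that if these events occur consecutively (from any initial state) every site ends up carrying the symbol initially at site $i$. The site-specific fixation probability is $\rho_i=\lim_{t\to\infty}\Pr_{(\mathcal{M},\mathbf{m}_i)}[\mathbf{s}(t)=(\mathrm{M},\ldots,\mathrm{M})]$, where $\mathbf{m}_i$ is the state with M at site $i$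 and R at all other sites. *)

theory Defs
  imports "HOL-Probability.Probability"
begin

text \<open>A replacement event (R, alpha): R is the set of replaced sites, alpha i is the
  parent of site i (only values on R matter). Sites are 1..N; states are functions on nat,
  of which only the values on 1..N are relevant.\<close>

type_synonym event = "nat set \<times> (nat \<Rightarrow> nat)"

definition valid_event :: "nat \<Rightarrow> event \<Rightarrow> bool" where
  "valid_event N e \<longleftrightarrow> fst e \<subseteq> {1..N} \<and> (\<forall>i\<in>fst e. snd e i \<in> {1..N})"

definition apply_event :: "event \<Rightarrow> (nat \<Rightarrow> 'a) \<Rightarrow> (nat \<Rightarrow> 'a)" where
  "apply_event e s = (\<lambda>i. if i \<in> fst e then s (snd e i) else s i)"

definition replacement_rule :: "nat \<Rightarrow> event pmf \<Rightarrow> bool" where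
  "replacement_rule N p \<longleftrightarrow> (\<forall>e\<in>set_pmf p. valid_event N e)"

fun chain :: "event pmf \<Rightarrow> nat \<Rightarrow> (nat \<Rightarrow> 'a) \<Rightarrow> (nat \<Rightarrow> 'a) pmf" where
  "chain p 0 s = return_pmf s"
| "chain p (Suc t) s = bind_pmf (chain p t s) (\<lambda>s'. map_pmf (\<lambda>e. apply_event e s') p)"

definition apply_events :: "event list \<Rightarrow> (nat \<Rightarrow> 'a) \<Rightarrow> (nat \<Rightarrow> 'a)" where
  "apply_events es s = fold apply_event es s"

definition fixation_assumption :: "nat \<Rightarrow> event pmf \<Rightarrow> 'a itself \<Rightarrow> bool" where
  "fixation_assumption N p _ \<longleftrightarrow>
     (\<exists>i\<in>{1..N}. \<exists>es. (\<forall>e\<in>set es. pmf p e > 0) \<and>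
        (\<forall>s :: nat \<Rightarrow> 'a. \<forall>j\<in>{1..N}. apply_events es s j = s i))"

datatype MR = Mut | Res

definition m_state :: "nat \<Rightarrow> nat \<Rightarrow> MR" where
  "m_state i = (\<lambda>j. if j = i then Mut else Res)"

definition prob_all :: "nat \<Rightarrow> event pmf \<Rightarrow> (nat \<Rightarrow> 'a) \<Rightarrow> 'a \<Rightarrow> nat \<Rightarrow> real" where
  "prob_all N p s0 c t = measure_pmf.prob (chain p t s0) {s. \<forall>j\<in>{1..N}. s j = c}"

end

theory Submission
  imports Defs
begin

lemma apply_event_comp: "apply_event e (f \<circ> a) = f \<circ> apply_event e a"
  by (auto simp: apply_event_def fun_eq_iff)

lemma chain_comp: "chain p t (f \<circ> a) = map_pmf (\<lambda>b. f \<circ> b) (chain p t a)"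
proof (induction t)
  case 0 then show ?case by simp
next
  case (Suc t)
  show ?case
  proof -
    have "chain p (Suc t) (f \<circ> a) = bind_pmf (map_pmf (\<lambda>b. f \<circ> b) (chain p t a)) (\<lambda>s'. map_pmf (\<lambda>e. apply_event e s') p)"
      by (simp only: chain.simps Suc)
    also have "\<dots> = bind_pmf (chain p t a) (\<lambda>b. map_pmf (\<lambda>e. f \<circ> apply_event e b) p)"
      by (simp add: bind_map_pmf apply_event_comp)
    also have "\<dots> = map_pmf (\<lambda>b. f \<circ> b) (chain p (Suc t) a)"
      by (simp add: map_bind_pmf pmf.map_comp o_def)
    finally show ?thesis .
  qed
qed

lemma mono_step:
  assumes "\<And>x y. x \<in> A \<Longrightarrow> y \<in> set_pmf (f x) \<Longrightarrow> y \<in> A"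
  shows "measure_pmf.prob M A \<le> measure_pmf.prob (bind_pmf M f) A"
proof -
  have "emeasure (measure_pmf M) A = (\<integral>\<^sup>+x. indicator A x \<partial>M)" by simp
  also have "\<dots> \<le> (\<integral>\<^sup>+x. emeasure (measure_pmf (f x)) A \<partial>M)"
  proof (rule nn_integral_mono)
    fix x show "indicator A x \<le> emeasure (measure_pmf (f x)) A"
    proof (cases "x \<in> A")
      case True
      then have "set_pmf (f x) \<subseteq> A" using assms by blast
      then have "measure_pmf.prob (f x) A = 1"
        by (subst measure_pmf.prob_eq_1) (auto simp: AE_measure_pmf_iff)
      then have "emeasure (measure_pmf (f x)) A = 1"
        by (simp add: measure_pmf.emeasure_eq_measure)
      then show ?thesis using True by simp
    qed simp
  qed
  also have "\<dots> = emeasure (measure_pmf (bind_pmf M f)) A" by simp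
  finally show ?thesis by (simp add: measure_pmf.emeasure_eq_measure)
qed

theorem mainTheorem5:
  fixes N :: nat and p :: "event pmf" and i :: nat
  assumes "replacement_rule N p"
    and "fixation_assumption N p TYPE(nat)"
    and "i \<in> {1..N}"
  shows "\<exists>\<rho>. (prob_all N p (m_state i) Mut \<longlonglongrightarrow> \<rho>)
             \<and> (prob_all N p (\<lambda>j::nat. j) i \<longlonglongrightarrow> \<rho>)"
proof -
  let ?A = "{s::nat\<Rightarrow>nat. \<forall>j\<in>{1..N}. s j = i}"
  have eq: "prob_all N p (m_state i) Mut t = prob_all N p (\<lambda>j::nat. j) i t" for t
  proof -
    have "chain p t (m_state i) = map_pmf (\<lambda>b. m_state i \<circ> b) (chain p t (\<lambda>j. j))"
      using chain_comp[of p t "m_state i" "\<lambda>j. j"] by (simp add: o_def)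
    moreover have "(\<lambda>b. m_state i \<circ> b) -` {s. \<forall>j\<in>{1..N}. s j = Mut} = ?A"
      by (auto simp: m_state_def split: if_splits)
    ultimately show ?thesis unfolding prob_all_def by simp
  qed
  have inc: "incseq (prob_all N p (\<lambda>j::nat. j) i)"
  proof (rule incseq_SucI)
    fix t
    show "prob_all N p (\<lambda>j::nat. j) i t \<le> prob_all N p (\<lambda>j::nat. j) i (Suc t)"
      unfolding prob_all_def chain.simps
    proof (rule mono_step)
      fix x y assume x: "x \<in> {s::nat\<Rightarrow>nat. \<forall>j\<in>{1..N}. s j = i}"
        and y: "y \<in> set_pmf (map_pmf (\<lambda>e. apply_event e x) p)"
      then obtain e where e: "e \<in> set_pmf p" "y = apply_event e x" by auto
      have "valid_event N e" using assms(1) e(1) by (simp add: replacement_rule_def)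
      then show "y \<in> {s. \<forall>j\<in>{1..N}. s j = i}"
        using x e(2) by (auto simp: valid_event_def apply_event_def)
    qed
  qed
  have bnd: "\<forall>t. prob_all N p (\<lambda>j::nat. j) i t \<le> 1"
    by (simp add: prob_all_def)
  obtain L where L: "prob_all N p (\<lambda>j::nat. j) i \<longlonglongrightarrow> L"
    using incseq_convergent[OF inc bnd] by blast
  have "prob_all N p (m_state i) Mut = prob_all N p (\<lambda>j::nat. j) i" using eq by blast
  with L show ?thesis by auto
qed

end
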